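(* Let $ABC$ be a triangle with circumcenter $O$, nine-point center $N$ and orthocenter $H$. Let $A^*, B^*, C^*$ be the feet of the perpendiculars from $O$ to the lines $AH, BH, CH$ respectively. Then the Steiner line of $O$ with respect to triangle $A^*B^*C^*$ is the Euler line of triangle $A^*B^*C^*$.
   Context: $O$ lies on the circumcircle of $A^*B^*C^*$ (the circle with diameter $OH$). For a point $X$ on the circumcircle of a triangle, the reflections of $X$ over the three sidelines are collinear; the line containing them is the Steiner line of $X$ with respect to the triangle. *)

theory Defs
  imports "HOL-Analysis.Analysis"
begin

type_synonym point = "real ^ 2"

definition circumcenter :: "point \<Rightarrow> point \<Rightarrow> point \<Rightarrow> point" where
  "circumcenter A B C = (THE Q. dist Q A = dist Q B \<and> dist Q B = dist Q C)"

definition orthocenter :: "point \<Rightarrow> point \<Rightarrow> point \<Rightarrow> point" where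
  "orthocenter A B C = (THE H. (H - A) \<bullet> (B - C) = 0 \<and> (H - B) \<bullet> (C - A) = 0 \<and> (H - C) \<bullet> (A - B) = 0)"

definition foot :: "point \<Rightarrow> point \<Rightarrow> point \<Rightarrow> point" where
  "foot P X Y = (THE F. F \<in> affine hull {X, Y} \<and> (P - F) \<bullet> (Y - X) = 0)"

definition reflect_line :: "point \<Rightarrow> point \<Rightarrow> point \<Rightarrow> point" where
  "reflect_line P X Y = 2 *\<^sub>R foot P X Y - P"

definition steiner_line :: "point \<Rightarrow> point \<Rightarrow> point \<Rightarrow> point \<Rightarrow> point set" where
  "steiner_line P A B C = affine hull {reflect_line P B C, reflect_line P C A, reflect_line P A B}"

definition euler_line :: "point \<Rightarrow> point \<Rightarrow> point \<Rightarrow> point set" where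
  "euler_line A B C = affine hull {circumcenter A B C, orthocenter A B C}"

end

theory Submission
  imports Defs
begin


definition c2 :: "point \<Rightarrow> complex" where "c2 x = Complex (x$1) (x$2)"
definition p2 :: "complex \<Rightarrow> point" where "p2 z = (\<chi> i. if i = 1 then Re z else Im z)"

lemma c2_p2[simp]: "c2 (p2 z) = z"
  by (simp add: c2_def p2_def complex_eq_iff)
lemma p2_c2[simp]: "p2 (c2 x) = x"
  by (simp add: c2_def p2_def vec_eq_iff forall_2)
lemma c2_inj[simp]: "c2 x = c2 y \<longleftrightarrow> x = y"
  by (metis p2_c2)
lemma c2_add[simp]: "c2 (x + y) = c2 x + c2 y"
  by (simp add: c2_def complex_eq_iff)
lemma c2_diff[simp]: "c2 (x - y) = c2 x - c2 y"
  by (simp add: c2_def complex_eq_iff)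
lemma c2_scaleR[simp]: "c2 (t *\<^sub>R x) = of_real t * c2 x"
  by (simp add: c2_def complex_eq_iff)
lemma c2_zero[simp]: "c2 0 = 0"
  by (simp add: c2_def complex_eq_iff)
lemma inner_c2: "x \<bullet> y = Re (c2 x * cnj (c2 y))"
  by (simp add: c2_def inner_vec_def sum_2)
lemma dist_c2: "dist x y = cmod (c2 x - c2 y)"
proof -
  have "dist x y = sqrt ((x - y) \<bullet> (x - y))" by (simp add: dist_norm norm_eq_sqrt_inner)
  also have "(x - y) \<bullet> (x - y) = (cmod (c2 x - c2 y))^2"
    unfolding inner_c2 c2_diff complex_mult_cnj Re_complex_of_real by (simp add: cmod_power2)
  finally show ?thesis by simp
qed
lemma linear_c2: "bounded_linear c2"
proof -
  have "linear c2" by (rule linearI) (auto simp: c2_def complex_eq_iff)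
  then show ?thesis by (simp add: linear_conv_bounded_linear)
qed
lemma hull_c2: "P \<in> affine hull {X, Y} \<longleftrightarrow> c2 P \<in> affine hull {c2 X, c2 Y}"
proof -
  have "c2 ` (affine hull {X,Y}) = affine hull {c2 X, c2 Y}"
    using affine_hull_linear_image[OF linear_c2, of "{X,Y}"] by simp
  moreover have "inj c2" by (simp add: inj_def)
  ultimately show ?thesis by (metis inj_image_mem_iff)
qed

lemma cline: fixes x y z :: complex assumes "x \<noteq> y"
  shows "z \<in> affine hull {x, y} \<longleftrightarrow> Im ((z - x) * cnj (y - x)) = 0"
proof
  assume "z \<in> affine hull {x, y}"
  then obtain u v where "z = u *\<^sub>R x + v *\<^sub>R y" "u + v = 1" by (auto simp: affine_hull_2)
  then have "z = (1 - v) *\<^sub>R x + v *\<^sub>R y" by (metis add_diff_cancel_right')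
  then have "z - x = of_real v * (y - x)" by (simp add: scaleR_conv_of_real algebra_simps)
  then have "(z - x) * cnj (y - x) = of_real v * ((y - x) * cnj (y - x))" by (simp add: mult.assoc)
  also have "\<dots> = of_real (v * (cmod (y - x))^2)" by (simp only: complex_mult_cnj cmod_power2 of_real_mult)
  finally show "Im ((z - x) * cnj (y - x)) = 0" by (simp only: Im_complex_of_real)
next
  assume h: "Im ((z - x) * cnj (y - x)) = 0"
  define w where "w = (z - x) * cnj (y - x)"
  define v where "v = Re w / (cmod (y - x))^2"
  have ne: "(cmod (y - x))^2 \<noteq> 0" using assms by simp
  have w: "w = of_real (Re w)"
    using h by (simp add: complex_eq_iff w_def)
  have "(z - x) * of_real ((cmod (y - x))^2) = (z - x) * (cnj (y - x) * (y - x))"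
    by (simp only: complex_mult_cnj cmod_power2 mult.commute[of "cnj (y - x)"])
  also have "\<dots> = w * (y - x)" by (simp add: w_def mult.assoc)
  also have "\<dots> = of_real (Re w) * (y - x)" using w by simp
  finally have e: "(z - x) * of_real ((cmod (y - x))^2) = of_real (Re w) * (y - x)" .
  have ne2: "(of_real ((cmod (y - x))^2) :: complex) \<noteq> 0" using ne by simp
  have "z - x = of_real v * (y - x)"
    unfolding v_def using e ne2
    by (simp add: field_simps del: of_real_power)
  then have "z = (1 - v) *\<^sub>R x + v *\<^sub>R y" by (simp add: scaleR_conv_of_real algebra_simps)
  then show "z \<in> affine hull {x, y}" unfolding affine_hull_2 by (intro CollectI exI[of _ "1 - v"] exI[of _ v]) simp
qed

lemma line_c2: assumes "X \<noteq> Y"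
  shows "P \<in> affine hull {X, Y} \<longleftrightarrow> Im ((c2 P - c2 X) * cnj (c2 Y - c2 X)) = 0"
  using cline[of "c2 X" "c2 Y" "c2 P"] assms by (simp add: hull_c2)

lemma coll_c2: "collinear {X, Y, Z} \<longleftrightarrow> Im ((c2 Z - c2 X) * cnj (c2 Y - c2 X)) = 0"
proof (cases "X = Y")
  case True then show ?thesis by simp
next
  case False then show ?thesis by (simp add: collinear_3_affine_hull line_c2)
qed



lemma perp2: fixes d u v :: complex
  assumes "Re (d * cnj u) = 0" "Re (d * cnj v) = 0" "Im (v * cnj u) \<noteq> 0"
  shows "d = 0"
proof -
  have e1: "Re d * Re u + Im d * Im u = 0" using assms(1) by simp
  have e2: "Re d * Re v + Im d * Im v = 0" using assms(2) by simp
  have k: "Im v * Re u - Re v * Im u \<noteq> 0" using assms(3) by simp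
  have "Re d * (Im v * Re u - Re v * Im u) = Im v * (Re d * Re u + Im d * Im u) - Im u * (Re d * Re v + Im d * Im v)"
    by (simp add: algebra_simps)
  then have "Re d * (Im v * Re u - Re v * Im u) = 0" using e1 e2 by simp
  then have r: "Re d = 0" using k by simp
  have "Im d * (Im v * Re u - Re v * Im u) = Re u * (Re d * Re v + Im d * Im v) - Re v * (Re d * Re u + Im d * Im u)"
    by (simp add: algebra_simps)
  then have "Im d * (Im v * Re u - Re v * Im u) = 0" using e1 e2 by simp
  then have "Im d = 0" using k by simp
  with r show ?thesis by (simp add: complex_eq_iff)
qed

lemma perp: fixes X Y Z d :: point
  assumes "\<not> collinear {X, Y, Z}" "d \<bullet> (Y - X) = 0" "d \<bullet> (Z - X) = 0"
  shows "d = 0"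
proof -
  have "c2 d = 0"
    using perp2[of "c2 d" "c2 Y - c2 X" "c2 Z - c2 X"] assms by (simp add: coll_c2 inner_c2)
  then show ?thesis by (metis c2_inj c2_zero)
qed

lemma dist_eq_inner: fixes Q X Y :: point
  assumes "dist Q X = dist Q Y"
  shows "2 * (Q \<bullet> (Y - X)) = Y \<bullet> Y - X \<bullet> X"
proof -
  have "(Q - X) \<bullet> (Q - X) = (Q - Y) \<bullet> (Q - Y)"
    using assms by (simp add: dist_norm norm_eq_sqrt_inner)
  then show ?thesis by (simp add: inner_diff_left inner_diff_right inner_commute algebra_simps)
qed

lemma circ_eq: fixes X Y Z Q :: point
  assumes nc: "\<not> collinear {X, Y, Z}" and "dist Q X = dist Q Y" "dist Q Y = dist Q Z"
  shows "circumcenter X Y Z = Q"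
  unfolding circumcenter_def
proof (rule the_equality)
  show "dist Q X = dist Q Y \<and> dist Q Y = dist Q Z" using assms by simp
next
  fix Q' assume a: "dist Q' X = dist Q' Y \<and> dist Q' Y = dist Q' Z"
  have 1: "2 * (Q \<bullet> (Y - X)) = Y \<bullet> Y - X \<bullet> X" "2 * (Q \<bullet> (Z - X)) = Z \<bullet> Z - X \<bullet> X"
    using dist_eq_inner assms by (metis, metis)
  have 2: "2 * (Q' \<bullet> (Y - X)) = Y \<bullet> Y - X \<bullet> X" "2 * (Q' \<bullet> (Z - X)) = Z \<bullet> Z - X \<bullet> X"
    using dist_eq_inner a by (metis, metis)
  have "Q' - Q = 0"
    by (rule perp[OF nc]) (use 1 2 in \<open>simp_all add: inner_diff_left\<close>)
  then show "Q' = Q" by simp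
qed

lemma ortho_eq: fixes X Y Z Q :: point
  assumes nc: "\<not> collinear {X, Y, Z}" and d: "dist Q X = dist Q Y" "dist Q Y = dist Q Z"
  shows "orthocenter X Y Z = X + Y + Z - 2 *\<^sub>R Q"
proof -
  define G where "G = X + Y + Z - 2 *\<^sub>R Q"
  have n: "(X - Q) \<bullet> (X - Q) = (Y - Q) \<bullet> (Y - Q)" "(Y - Q) \<bullet> (Y - Q) = (Z - Q) \<bullet> (Z - Q)"
  proof -
    have "dist X Q = dist Y Q" "dist Y Q = dist Z Q" using d by (simp_all add: dist_commute)
    then show "(X - Q) \<bullet> (X - Q) = (Y - Q) \<bullet> (Y - Q)" "(Y - Q) \<bullet> (Y - Q) = (Z - Q) \<bullet> (Z - Q)"
      by (simp_all add: dist_norm norm_eq_sqrt_inner)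
  qed
  have "\<And>U V :: point. (U + V) \<bullet> (U - V) = U \<bullet> U - V \<bullet> V"
    unfolding inner_add_left inner_diff_right by (simp add: inner_commute)
  note k = this
  have "G - X = (Y - Q) + (Z - Q)" "Y - Z = (Y - Q) - (Z - Q)"
     "G - Y = (Z - Q) + (X - Q)" "Z - X = (Z - Q) - (X - Q)"
     "G - Z = (X - Q) + (Y - Q)" "X - Y = (X - Q) - (Y - Q)"
    by (simp_all add: G_def algebra_simps scaleR_2)
  then have g: "(G - X) \<bullet> (Y - Z) = 0 \<and> (G - Y) \<bullet> (Z - X) = 0 \<and> (G - Z) \<bullet> (X - Y) = 0"
    using n by (simp only: k) simp
  show ?thesis
    unfolding orthocenter_def G_def[symmetric]
  proof (rule the_equality)
    show "(G - X) \<bullet> (Y - Z) = 0 \<and> (G - Y) \<bullet> (Z - X) = 0 \<and> (G - Z) \<bullet> (X - Y) = 0" by (rule g)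
  next
    fix H assume a: "(H - X) \<bullet> (Y - Z) = 0 \<and> (H - Y) \<bullet> (Z - X) = 0 \<and> (H - Z) \<bullet> (X - Y) = 0"
    have hg1: "H - G = (H - X) - (G - X)" "H - G = (H - Y) - (G - Y)" by simp_all
    have e1: "(H - G) \<bullet> (Y - Z) = 0" using a g unfolding hg1(1) inner_diff_left by simp
    have e2: "(H - G) \<bullet> (Z - X) = 0" using a g unfolding hg1(2) inner_diff_left by simp
    have e3: "(H - G) \<bullet> (Y - X) = 0"
    proof -
      have "Y - X = (Y - Z) + (Z - X)" by simp
      then show ?thesis using e1 e2 by (simp only: inner_add_right)
    qed
    have "H - G = 0" by (rule perp[OF nc e3 e2]) 
    then show "H = G" by simp
  qed
qed



lemma foot_eq: fixes P X Y F :: point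
  assumes ne: "X \<noteq> Y" and f: "F \<in> affine hull {X, Y}" "(P - F) \<bullet> (Y - X) = 0"
  shows "foot P X Y = F"
  unfolding foot_def
proof (rule the_equality)
  show "F \<in> affine hull {X, Y} \<and> (P - F) \<bullet> (Y - X) = 0" using f by simp
next
  fix F' assume a: "F' \<in> affine hull {X, Y} \<and> (P - F') \<bullet> (Y - X) = 0"
  have i1: "Im ((c2 F - c2 X) * cnj (c2 Y - c2 X)) = 0" using f ne line_c2 by blast
  have i2: "Im ((c2 F' - c2 X) * cnj (c2 Y - c2 X)) = 0" using a ne line_c2 by blast
  have r1: "Re ((c2 P - c2 F) * cnj (c2 Y - c2 X)) = 0" using f by (simp add: inner_c2)
  have r2: "Re ((c2 P - c2 F') * cnj (c2 Y - c2 X)) = 0" using a by (simp add: inner_c2)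
  have "(c2 F' - c2 F) * cnj (c2 Y - c2 X) = 0"
    using i1 i2 r1 r2 by (simp add: complex_eq_iff algebra_simps)
  moreover have "cnj (c2 Y - c2 X) \<noteq> 0" using ne by simp
  ultimately have "c2 F' = c2 F" by simp
  then show "F' = F" by simp
qed

lemma line_eq: fixes X Y R1 R2 R3 :: point
  assumes "X \<noteq> Y" "R1 \<in> affine hull {X, Y}" "R2 \<in> affine hull {X, Y}" "R3 \<in> affine hull {X, Y}"
    and "\<not> (R1 = R2 \<and> R2 = R3)"
  shows "affine hull {R1, R2, R3} = affine hull {X, Y}"
proof
  show "affine hull {R1, R2, R3} \<subseteq> affine hull {X, Y}"
    using assms by (intro hull_minimal) (auto simp: affine_affine_hull)
next
  have cl: "collinear (affine hull {X, Y})" by (simp add: collinear_affine_hull_collinear)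
  have key: "affine hull {X, Y} \<subseteq> affine hull {S, T}"
    if "S \<noteq> T" "S \<in> affine hull {X, Y}" "T \<in> affine hull {X, Y}" for S T
  proof -
    have X: "X \<in> affine hull {X, Y}" "Y \<in> affine hull {X, Y}" by (simp_all add: hull_inc)
    have "collinear {S, T, X}" "collinear {S, T, Y}"
      using collinear_subset[OF cl] that X by auto
    then have "X \<in> affine hull {S, T}" "Y \<in> affine hull {S, T}"
      using collinear_3_imp_in_affine_hull that(1) by blast+
    then show ?thesis by (intro hull_minimal) (auto simp: affine_affine_hull)
  qed
  show "affine hull {X, Y} \<subseteq> affine hull {R1, R2, R3}"
  proof (cases "R1 = R2")
    case True
    then have "R2 \<noteq> R3" using assms(5) by simp
    then have "affine hull {X, Y} \<subseteq> affine hull {R2, R3}" using key assms by blast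
    also have "\<dots> \<subseteq> affine hull {R1, R2, R3}" by (intro hull_mono) auto
    finally show ?thesis .
  next
    case False
    then have "affine hull {X, Y} \<subseteq> affine hull {R1, R2}" using key assms by blast
    also have "\<dots> \<subseteq> affine hull {R1, R2, R3}" by (intro hull_mono) auto
    finally show ?thesis .
  qed
qed

lemma circ_exists: fixes X Y Z :: point
  assumes nc: "\<not> collinear {X, Y, Z}"
  shows "\<exists>Q. dist Q X = dist Q Y \<and> dist Q Y = dist Q Z"
proof -
  define u where "u = c2 Y - c2 X"
  define v where "v = c2 Z - c2 X"
  define D where "D = Im v * Re u - Re v * Im u"
  have D: "D \<noteq> 0" using nc unfolding coll_c2 D_def u_def[symmetric] v_def[symmetric] by simp
  define nu where "nu = Re u ^ 2 + Im u ^ 2"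
  define nv where "nv = Re v ^ 2 + Im v ^ 2"
  define w where "w = Complex ((Im v * nu - Im u * nv) / (2 * D)) ((Re u * nv - Re v * nu) / (2 * D))"
  define Q where "Q = p2 (c2 X + w)"
  have q1: "(cmod w)^2 = (cmod (w - u))^2"
    unfolding cmod_power2 w_def using D by (simp add: nu_def nv_def D_def field_simps) (simp add: algebra_simps power2_eq_square)
  have q2: "(cmod w)^2 = (cmod (w - v))^2"
    unfolding cmod_power2 w_def using D by (simp add: nu_def nv_def D_def field_simps) (simp add: algebra_simps power2_eq_square)
  have "cmod w = cmod (w - u)" "cmod w = cmod (w - v)"
    using q1 q2 by (simp_all add: power2_eq_iff_nonneg)
  then have "dist Q X = dist Q Y \<and> dist Q Y = dist Q Z"
    by (simp add: dist_c2 Q_def u_def v_def algebra_simps)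
  then show ?thesis by blast
qed



definition st :: "complex \<Rightarrow> complex \<Rightarrow> complex \<Rightarrow> complex" where
  "st a b c = (a - b * c / a) / 2"

lemma Im_zero_iff: "Im w = 0 \<longleftrightarrow> cnj w = w" by (simp add: complex_eq_iff)
lemma Re_zero_iff: "Re w = 0 \<longleftrightarrow> cnj w = - w" by (simp add: complex_eq_iff)

locale cc =
  fixes a b c R :: complex
  assumes nz: "a \<noteq> 0" "b \<noteq> 0" "c \<noteq> 0" "R \<noteq> 0"
    and cj: "cnj a = R / a" "cnj b = R / b" "cnj c = R / c" "cnj R = R"
begin

lemmas cjs = complex_cnj_mult complex_cnj_divide complex_cnj_add complex_cnj_diff
  complex_cnj_numeral complex_cnj_one complex_cnj_zero complex_cnj_minus cj st_def complex_cnj_power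

lemma A1a: assumes "b + c \<noteq> 0" shows "Im ((st a b c - a) * cnj (b + c)) = 0"
  unfolding Im_zero_iff using nz assms
  apply (simp only: cjs complex_cnj_cnj)
  by ((simp add: field_simps); algebra?)

lemma A1b: shows "Re (st a b c * cnj (b + c)) = 0"
  unfolding Re_zero_iff using nz
  apply (simp only: cjs complex_cnj_cnj)
  by ((simp add: field_simps); algebra?)

lemma cnjh: "cnj (a + b + c) = R * (a * b + b * c + c * a) / (a * b * c)"
  using nz by (simp only: cjs) (simp add: field_simps)

lemma A2: assumes "a + b + c \<noteq> 0" shows "a * b + b * c + c * a \<noteq> 0"
proof
  assume h: "a * b + b * c + c * a = 0"
  have "cnj (a + b + c) = 0" using h by (simp only: cnjh) simp
  then show False using assms by (metis complex_cnj_zero_iff)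
qed

lemma A3: "(st c a b - st a b c) * cnj (st b c a - st a b c) =
   (a * b + b * c + c * a) * cnj (a * b + b * c + c * a) / (4 * R ^ 2) * cnj ((c - a) * cnj (b - a))"
  using nz
  apply (simp only: cjs complex_cnj_cnj)
  by ((simp add: field_simps); algebra?)

lemma A4: "st a b c - (a + b + c) / 2 = - (a * b + b * c + c * a) / (2 * a)"
  using nz by ((simp add: st_def field_simps); algebra?)

lemma A5: "st b c a - st c a b = (b - c) * (a * b + b * c + c * a) / (2 * b * c)"
  using nz by ((simp add: st_def field_simps); algebra?)

lemma cnj_sq: "cnj (st c a b - st b c a) = R * (b - c) * (a + b + c) / (2 * a * b * c)"
  using nz
  apply (simp only: cjs complex_cnj_cnj)
  by ((simp add: field_simps); algebra?)

lemma A6a: assumes "a + b + c \<noteq> 0"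
  shows "Im ((st b c a * st c a b / (a + b + c) - st b c a) * cnj (st c a b - st b c a)) = 0"
proof -
  have e: "(st b c a * st c a b / (a + b + c) - st b c a) * cnj (st c a b - st b c a) =
    - R * (b - c) * (b^2 - c * a) * (c^2 + a * b + 2 * a * c + 2 * b * c) / (8 * a * b^2 * c^2)"
  proof -
    have "(st b c a * st c a b / h - st b c a) * (R * (b - c) * h / (2 * a * b * c)) =
    - R * (b - c) * (b^2 - c * a) * (c^2 + a * b + 2 * a * c + 2 * b * c) / (8 * a * b^2 * c^2)"
      if "h \<noteq> 0" "h = a + b + c" for h
      using nz that(1) apply (simp add: st_def field_simps)
      using that(2) by algebra
    then show ?thesis unfolding cnj_sq using assms by simp
  qed
  show ?thesis unfolding e Im_zero_iff using nz
    apply (simp only: cjs complex_cnj_cnj)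
    by ((simp add: field_simps); algebra?)
qed

lemma A6b: assumes "a + b + c \<noteq> 0"
  shows "Re ((st b c a * st c a b / (a + b + c)) * cnj (st c a b - st b c a)) = 0"
proof -
  have e: "(st b c a * st c a b / (a + b + c)) * cnj (st c a b - st b c a) =
    R * (b - c) * (b^2 - c * a) * (c^2 - a * b) / (8 * a * b^2 * c^2)"
  proof -
    have "(st b c a * st c a b / h) * (R * (b - c) * h / (2 * a * b * c)) =
    R * (b - c) * (b^2 - c * a) * (c^2 - a * b) / (8 * a * b^2 * c^2)"
      if "h \<noteq> 0" for h
      using nz that(1) by ((simp add: st_def field_simps); algebra?)
    then show ?thesis unfolding cnj_sq using assms by simp
  qed
  show ?thesis unfolding e Re_zero_iff using nz
    apply (simp only: cjs complex_cnj_cnj)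
    by ((simp add: field_simps); algebra?)
qed

lemma A7: assumes "a + b + c \<noteq> 0" "a * b + b * c + c * a \<noteq> 0"
  shows "Im ((2 * (st b c a * st c a b / (a + b + c)) - (a + b + c) / 2) *
     cnj ((st a b c + st b c a + st c a b - (a + b + c)) - (a + b + c) / 2)) = 0"
proof -
  have x: "2 * (st b c a * st c a b / (a + b + c)) - (a + b + c) / 2 =
     - (b^2 + b * c + c^2) * (a * b + b * c + c * a) / (2 * b * c * (a + b + c))"
  proof -
    have "2 * (st b c a * st c a b / h) - h / 2 =
     - (b^2 + b * c + c^2) * (a * b + b * c + c * a) / (2 * b * c * h)"
      if "h \<noteq> 0" "h = a + b + c" for h
      using nz that(1) apply (simp add: st_def field_simps)
      using that(2) by algebra
    then show ?thesis using assms by simp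
  qed
  have y: "(st a b c + st b c a + st c a b - (a + b + c)) - (a + b + c) / 2 =
     - ((a * b + b * c + c * a)^2) / (2 * a * b * c)"
    using nz assms by ((simp add: st_def field_simps); algebra?)
  have "cnj (- ((a * b + b * c + c * a)^2) / (2 * a * b * c)) = - R * (a + b + c)^2 / (2 * a * b * c)"
    using nz
    apply (simp only: cjs complex_cnj_cnj)
    by ((simp add: field_simps); algebra?)
  then have "(2 * (st b c a * st c a b / (a + b + c)) - (a + b + c) / 2) *
     cnj ((st a b c + st b c a + st c a b - (a + b + c)) - (a + b + c) / 2) =
     R * (b^2 + b * c + c^2) * (a * b + b * c + c * a) * (a + b + c) / (4 * a * b^2 * c^2)"
  proof -
    assume cy: "cnj (- ((a * b + b * c + c * a)^2) / (2 * a * b * c)) = - R * (a + b + c)^2 / (2 * a * b * c)"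
    have "- (b^2 + b * c + c^2) * (a * b + b * c + c * a) / (2 * b * c * h) * (- R * h^2 / (2 * a * b * c))
       = R * (b^2 + b * c + c^2) * (a * b + b * c + c * a) * h / (4 * a * b^2 * c^2)"
      if "h \<noteq> 0" for h
      using nz that by ((simp add: field_simps); algebra?)
    then show ?thesis unfolding x y cy using assms by simp
  qed
  moreover have "Im (R * (b^2 + b * c + c^2) * (a * b + b * c + c * a) * (a + b + c) / (4 * a * b^2 * c^2)) = 0"
    unfolding Im_zero_iff using nz
    apply (simp only: cjs complex_cnj_cnj)
    by ((simp add: field_simps); algebra?)
  ultimately show ?thesis by simp
qed

lemma A8: assumes "a * b + b * c + c * a \<noteq> 0"
  shows "st a b c + st b c a + st c a b - (a + b + c) \<noteq> (a + b + c) / 2"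
proof
  assume h: "st a b c + st b c a + st c a b - (a + b + c) = (a + b + c) / 2"
  have "st a b c + st b c a + st c a b - (a + b + c) - (a + b + c) / 2 = - ((a * b + b * c + c * a)^2) / (2 * a * b * c)"
    using nz by ((simp add: st_def field_simps); algebra?)
  then show False using h assms nz by simp
qed

end

theorem lemma3p2:
  fixes A B C :: point
  assumes "\<not> collinear {A, B, C}"
    and "orthocenter A B C \<noteq> A" "orthocenter A B C \<noteq> B" "orthocenter A B C \<noteq> C"
    and "circumcenter A B C \<noteq> orthocenter A B C"
  shows "steiner_line (circumcenter A B C)
           (foot (circumcenter A B C) A (orthocenter A B C))
           (foot (circumcenter A B C) B (orthocenter A B C))
           (foot (circumcenter A B C) C (orthocenter A B C))
         = euler_line
           (foot (circumcenter A B C) A (orthocenter A B C))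
           (foot (circumcenter A B C) B (orthocenter A B C))
           (foot (circumcenter A B C) C (orthocenter A B C))"
proof -
  note nc = assms(1)
  obtain Oo where Od: "dist Oo A = dist Oo B" "dist Oo B = dist Oo C"
    using circ_exists[OF nc] by blast
  have Oeq: "circumcenter A B C = Oo" using circ_eq[OF nc Od] .
  define H where "H = A + B + C - 2 *\<^sub>R Oo"
  have Heq: "orthocenter A B C = H" unfolding H_def using ortho_eq[OF nc Od] .
  define zo where "zo = c2 Oo"
  define a where "a = c2 A - zo"
  define b where "b = c2 B - zo"
  define c where "c = c2 C - zo"
  have zA: "c2 A = zo + a" and zB: "c2 B = zo + b" and zC: "c2 C = zo + c"
    by (simp_all add: a_def b_def c_def)
  have zH: "c2 H = zo + (a + b + c)"
    by (simp add: H_def zA zB zC zo_def[symmetric])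
  have ma: "cmod a = cmod b" "cmod b = cmod c"
    using Od by (simp_all add: dist_c2 zA zB zC zo_def[symmetric] norm_minus_commute)
  have a0: "a \<noteq> 0"
  proof
    assume "a = 0"
    then have "b = 0" "c = 0" using ma by simp_all
    then have "c2 A = c2 B" "c2 B = c2 C" using \<open>a = 0\<close> zA zB zC by simp_all
    then have "A = B" "B = C" by simp_all
    then show False using nc by simp
  qed
  have b0: "b \<noteq> 0" and c0: "c \<noteq> 0" using a0 ma by (metis norm_eq_zero)+
  define r where "r = (cmod a)^2"
  define Rr where "Rr = (of_real r :: complex)"
  have rpos: "r > 0" using a0 by (simp add: r_def)
  have R0: "Rr \<noteq> 0" using rpos by (simp add: Rr_def)
  have "a * cnj a = Rr" unfolding Rr_def r_def complex_norm_square ..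
  then have cja: "cnj a = Rr / a" using a0 by (simp add: field_simps)
  have "b * cnj b = Rr" unfolding Rr_def r_def ma(1) complex_norm_square ..
  then have cjb: "cnj b = Rr / b" using b0 by (simp add: field_simps)
  have "c * cnj c = Rr" unfolding Rr_def r_def ma complex_norm_square ..
  then have cjc: "cnj c = Rr / c" using c0 by (simp add: field_simps)
  have cjR: "cnj Rr = Rr" by (simp add: Rr_def)
  interpret ca: cc a b c Rr using a0 b0 c0 R0 cja cjb cjc cjR by unfold_locales
  interpret cb: cc b c a Rr using a0 b0 c0 R0 cja cjb cjc cjR by unfold_locales
  interpret cx: cc c a b Rr using a0 b0 c0 R0 cja cjb cjc cjR by unfold_locales
  have bc0: "b + c \<noteq> 0"
  proof
    assume "b + c = 0"
    then have "c2 H = c2 A" by (simp add: zH zA algebra_simps)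
    then show False using assms(2) Heq by simp
  qed
  have ca0: "c + a \<noteq> 0"
  proof
    assume "c + a = 0"
    then have "c2 H = c2 B" by (simp add: zH zB algebra_simps)
    then show False using assms(3) Heq by simp
  qed
  have ab0: "a + b \<noteq> 0"
  proof
    assume "a + b = 0"
    then have "c2 H = c2 C" by (simp add: zH zC algebra_simps)
    then show False using assms(4) Heq by simp
  qed
  have h0: "a + b + c \<noteq> 0"
  proof
    assume "a + b + c = 0"
    then have "c2 H = c2 Oo" by (simp add: zH zo_def)
    then show False using assms(5) Heq Oeq by simp
  qed
  have hb: "b + c + a = a + b + c" and hc: "c + a + b = a + b + c" by (simp_all add: ac_simps)
  have s20: "a * b + b * c + c * a \<noteq> 0" using ca.A2[OF h0] .
  have s2b: "b * c + c * a + a * b = a * b + b * c + c * a" and s2c: "c * a + a * b + b * c = a * b + b * c + c * a"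
    by (simp_all add: ac_simps)
  define p where "p = st a b c"
  define q where "q = st b c a"
  define s where "s = st c a b"
  have AH: "A \<noteq> H" and BH: "B \<noteq> H" and CH: "C \<noteq> H" using assms(2-4) Heq by auto
  have fA: "foot Oo A H = p2 (zo + p)"
  proof (rule foot_eq[OF AH])
    show "p2 (zo + p) \<in> affine hull {A, H}"
      unfolding line_c2[OF AH] using ca.A1a[OF bc0] by (simp add: zA zH p_def algebra_simps)
    show "(Oo - p2 (zo + p)) \<bullet> (H - A) = 0"
      unfolding inner_c2 using ca.A1b by (simp add: zA zH p_def zo_def[symmetric])
  qed
  have fB: "foot Oo B H = p2 (zo + q)"
  proof (rule foot_eq[OF BH])
    show "p2 (zo + q) \<in> affine hull {B, H}"
      unfolding line_c2[OF BH] using cb.A1a[OF ca0] by (simp add: zB zH q_def algebra_simps)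
    show "(Oo - p2 (zo + q)) \<bullet> (H - B) = 0"
      unfolding inner_c2 using cb.A1b by (simp add: zB zH q_def zo_def[symmetric] algebra_simps)
  qed
  have fC: "foot Oo C H = p2 (zo + s)"
  proof (rule foot_eq[OF CH])
    show "p2 (zo + s) \<in> affine hull {C, H}"
      unfolding line_c2[OF CH] using cx.A1a[OF ab0] by (simp add: zC zH s_def algebra_simps)
    show "(Oo - p2 (zo + s)) \<bullet> (H - C) = 0"
      unfolding inner_c2 using cx.A1b by (simp add: zC zH s_def zo_def[symmetric] algebra_simps)
  qed
  define As where "As = p2 (zo + p)"
  define Bs where "Bs = p2 (zo + q)"
  define Cs where "Cs = p2 (zo + s)"
  have qs: "q - s = (b - c) * (a * b + b * c + c * a) / (2 * b * c)"
    using ca.A5 unfolding q_def s_def .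
  have sp: "s - p = (c - a) * (a * b + b * c + c * a) / (2 * c * a)"
    using cb.A5 unfolding s_def p_def s2b .
  have pq: "p - q = (a - b) * (a * b + b * c + c * a) / (2 * a * b)"
    using cx.A5 unfolding p_def q_def s2c .
  have nab: "a \<noteq> b" and nbc: "b \<noteq> c" and nca: "c \<noteq> a"
  proof -
    show "a \<noteq> b"
    proof
      assume "a = b" then have "c2 A = c2 B" using zA zB by simp
      then have "A = B" by simp
      then show False using nc by simp
    qed
    show "b \<noteq> c"
    proof
      assume "b = c" then have "c2 B = c2 C" using zB zC by simp
      then have "B = C" by simp
      then show False using nc by simp
    qed
    show "c \<noteq> a"
    proof
      assume "c = a" then have "c2 C = c2 A" using zA zC by simp
      then have "C = A" by simp
      then show False using nc by (simp add: insert_commute)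
    qed
  qed
  have qs0: "q \<noteq> s" using qs nbc s20 b0 c0 by auto
  have sp0: "s \<noteq> p" using sp nca s20 a0 c0 by auto
  have pq0: "p \<noteq> q" using pq nab s20 a0 b0 by auto
  have ncs: "\<not> collinear {As, Bs, Cs}"
  proof -
    define z where "z = (c - a) * cnj (b - a)"
    have z0: "Im z \<noteq> 0" using nc unfolding coll_c2 z_def by (simp add: zA zB zC)
    define k where "k = (cmod (a * b + b * c + c * a))^2 / (4 * r^2)"
    have kp: "k > 0" using s20 rpos unfolding k_def by simp
    have "(a * b + b * c + c * a) * cnj (a * b + b * c + c * a) / (4 * Rr ^ 2) = of_real k"
      unfolding k_def Rr_def of_real_divide complex_norm_square by simp
    then have "(s - p) * cnj (q - p) = of_real k * cnj z"
      using ca.A3 unfolding s_def p_def q_def z_def by simp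
    moreover have "\<And>w. Im (of_real k * cnj w) = - k * Im w" by simp
    ultimately have "Im ((s - p) * cnj (q - p)) = - k * Im z" by metis
    then have "Im ((s - p) * cnj (q - p)) \<noteq> 0" using kp z0 by simp
    then show ?thesis unfolding coll_c2 As_def Bs_def Cs_def by simp
  qed
  define Ns where "Ns = p2 (zo + (a + b + c) / 2)"
  have dA: "dist Ns As = cmod (a * b + b * c + c * a) / (2 * cmod a)"
  proof -
    have "dist Ns As = cmod (- (p - (a + b + c) / 2))" unfolding dist_c2 Ns_def As_def by (simp add: algebra_simps)
    also have "\<dots> = cmod (a * b + b * c + c * a) / (2 * cmod a)" unfolding norm_minus_cancel p_def ca.A4 norm_divide norm_mult norm_minus_cancel by simp
    finally show ?thesis .
  qed
  have dB: "dist Ns Bs = cmod (a * b + b * c + c * a) / (2 * cmod a)"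
  proof -
    have "dist Ns Bs = cmod (- (q - (b + c + a) / 2))" unfolding dist_c2 Ns_def Bs_def hb by (simp add: algebra_simps)
    also have "\<dots> = cmod (a * b + b * c + c * a) / (2 * cmod a)" unfolding norm_minus_cancel q_def cb.A4 s2b norm_divide norm_mult norm_minus_cancel using ma by simp
    finally show ?thesis .
  qed
  have dC: "dist Ns Cs = cmod (a * b + b * c + c * a) / (2 * cmod a)"
  proof -
    have "dist Ns Cs = cmod (- (s - (c + a + b) / 2))" unfolding dist_c2 Ns_def Cs_def hc by (simp add: algebra_simps)
    also have "\<dots> = cmod (a * b + b * c + c * a) / (2 * cmod a)" unfolding norm_minus_cancel s_def cx.A4 s2c norm_divide norm_mult norm_minus_cancel using ma by simp
    finally show ?thesis .
  qed
  have Neq: "circumcenter As Bs Cs = Ns" using circ_eq[OF ncs] dA dB dC by simp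
  define Hs where "Hs = p2 (zo + (p + q + s - (a + b + c)))"
  have Hseq: "orthocenter As Bs Cs = Hs"
  proof -
    have "orthocenter As Bs Cs = As + Bs + Cs - 2 *\<^sub>R Ns" using ortho_eq[OF ncs, of Ns] dA dB dC by simp
    moreover have "As + Bs + Cs - 2 *\<^sub>R Ns = Hs"
      by (rule c2_inj[THEN iffD1]) (simp add: As_def Bs_def Cs_def Ns_def Hs_def algebra_simps)
    ultimately show ?thesis by simp
  qed
  define hh where "hh = a + b + c"
  have hh0: "hh \<noteq> 0" using h0 by (simp add: hh_def)
  have BC: "Bs \<noteq> Cs" using qs0 by (metis Bs_def Cs_def c2_p2 add_left_cancel)
  have CA: "Cs \<noteq> As" using sp0 by (metis As_def Cs_def c2_p2 add_left_cancel)
  have AB: "As \<noteq> Bs" using pq0 by (metis As_def Bs_def c2_p2 add_left_cancel)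
  have F1: "foot Oo Bs Cs = p2 (zo + q * s / hh)"
  proof (rule foot_eq[OF BC])
    have "Im ((q * s / hh - q) * cnj (s - q)) = 0"
      using ca.A6a[OF h0] unfolding q_def s_def hh_def .
    then show "p2 (zo + q * s / hh) \<in> affine hull {Bs, Cs}"
      unfolding line_c2[OF BC] by (simp add: Bs_def Cs_def)
    have "Re ((q * s / hh) * cnj (s - q)) = 0"
      using ca.A6b[OF h0] unfolding q_def s_def hh_def .
    then show "(Oo - p2 (zo + q * s / hh)) \<bullet> (Cs - Bs) = 0"
      unfolding inner_c2 by (simp add: Bs_def Cs_def zo_def[symmetric])
  qed
  have F2: "foot Oo Cs As = p2 (zo + s * p / hh)"
  proof (rule foot_eq[OF CA])
    have "Im ((s * p / hh - s) * cnj (p - s)) = 0"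
      using cb.A6a[unfolded hb, OF h0] unfolding p_def s_def hh_def .
    then show "p2 (zo + s * p / hh) \<in> affine hull {Cs, As}"
      unfolding line_c2[OF CA] by (simp add: As_def Cs_def)
    have "Re ((s * p / hh) * cnj (p - s)) = 0"
      using cb.A6b[unfolded hb, OF h0] unfolding p_def s_def hh_def .
    then show "(Oo - p2 (zo + s * p / hh)) \<bullet> (As - Cs) = 0"
      unfolding inner_c2 by (simp add: As_def Cs_def zo_def[symmetric])
  qed
  have F3: "foot Oo As Bs = p2 (zo + p * q / hh)"
  proof (rule foot_eq[OF AB])
    have "Im ((p * q / hh - p) * cnj (q - p)) = 0"
      using cx.A6a[unfolded hc, OF h0] unfolding p_def q_def hh_def .
    then show "p2 (zo + p * q / hh) \<in> affine hull {As, Bs}"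
      unfolding line_c2[OF AB] by (simp add: As_def Bs_def)
    have "Re ((p * q / hh) * cnj (q - p)) = 0"
      using cx.A6b[unfolded hc, OF h0] unfolding p_def q_def hh_def .
    then show "(Oo - p2 (zo + p * q / hh)) \<bullet> (Bs - As) = 0"
      unfolding inner_c2 by (simp add: As_def Bs_def zo_def[symmetric])
  qed
  have R1: "reflect_line Oo Bs Cs = p2 (zo + 2 * (q * s / hh))"
    unfolding reflect_line_def F1 by (rule c2_inj[THEN iffD1]) (simp add: zo_def algebra_simps)
  have R2: "reflect_line Oo Cs As = p2 (zo + 2 * (s * p / hh))"
    unfolding reflect_line_def F2 by (rule c2_inj[THEN iffD1]) (simp add: zo_def algebra_simps)
  have R3: "reflect_line Oo As Bs = p2 (zo + 2 * (p * q / hh))"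
    unfolding reflect_line_def F3 by (rule c2_inj[THEN iffD1]) (simp add: zo_def algebra_simps)
  have NH: "Ns \<noteq> Hs"
  proof
    assume "Ns = Hs"
    then have "c2 Ns = c2 Hs" by simp
    then have "p + q + s - (a + b + c) = (a + b + c) / 2" by (simp add: Ns_def Hs_def)
    then show False using ca.A8[OF s20] unfolding p_def q_def s_def by simp
  qed
  have cHN: "c2 Hs - c2 Ns = (p + q + s - hh) - hh / 2" by (simp add: Hs_def Ns_def hh_def)
  have psum: "q + s + p = p + q + s" "s + p + q = p + q + s" by (simp_all add: ac_simps)
  have M1: "p2 (zo + 2 * (q * s / hh)) \<in> affine hull {Ns, Hs}"
  proof -
    have "Im ((2 * (q * s / hh) - hh / 2) * cnj ((p + q + s - hh) - hh / 2)) = 0"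
      using ca.A7[OF h0 s20] unfolding p_def q_def s_def hh_def .
    moreover have "c2 (p2 (zo + 2 * (q * s / hh))) - c2 Ns = 2 * (q * s / hh) - hh / 2"
      by (simp add: Ns_def hh_def)
    ultimately show ?thesis unfolding line_c2[OF NH] cHN by (simp only:)
  qed
  have M2: "p2 (zo + 2 * (s * p / hh)) \<in> affine hull {Ns, Hs}"
  proof -
    have "Im ((2 * (s * p / hh) - hh / 2) * cnj ((q + s + p - hh) - hh / 2)) = 0"
      using cb.A7[unfolded hb s2b, OF h0 s20] unfolding p_def q_def s_def hh_def .
    moreover have "c2 (p2 (zo + 2 * (s * p / hh))) - c2 Ns = 2 * (s * p / hh) - hh / 2"
      by (simp add: Ns_def hh_def)
    ultimately show ?thesis unfolding line_c2[OF NH] cHN psum by (simp only:)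
  qed
  have M3: "p2 (zo + 2 * (p * q / hh)) \<in> affine hull {Ns, Hs}"
  proof -
    have "Im ((2 * (p * q / hh) - hh / 2) * cnj ((s + p + q - hh) - hh / 2)) = 0"
      using cx.A7[unfolded hc s2c, OF h0 s20] unfolding p_def q_def s_def hh_def .
    moreover have "c2 (p2 (zo + 2 * (p * q / hh))) - c2 Ns = 2 * (p * q / hh) - hh / 2"
      by (simp add: Ns_def hh_def)
    ultimately show ?thesis unfolding line_c2[OF NH] cHN psum by (simp only:)
  qed
  have notall: "\<not> (p2 (zo + 2 * (q * s / hh)) = p2 (zo + 2 * (s * p / hh)) \<and>
                   p2 (zo + 2 * (s * p / hh)) = p2 (zo + 2 * (p * q / hh)))"
  proof
    assume e: "p2 (zo + 2 * (q * s / hh)) = p2 (zo + 2 * (s * p / hh)) \<and>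
                   p2 (zo + 2 * (s * p / hh)) = p2 (zo + 2 * (p * q / hh))"
    then have e1: "q * s = s * p" and e2: "s * p = p * q"
      using hh0 by (metis c2_p2 add_left_cancel mult_cancel_left nonzero_divide_eq_eq zero_neq_numeral divide_eq_eq)+
    from e1 have "s * (q - p) = 0" by (simp add: algebra_simps)
    then have "s = 0" using pq0 by simp
    from e2 have "p * (s - q) = 0" by (simp add: algebra_simps)
    then have "p = 0" using qs0 by simp
    with \<open>s = 0\<close> sp0 show False by simp
  qed
  have "affine hull {reflect_line Oo Bs Cs, reflect_line Oo Cs As, reflect_line Oo As Bs} = affine hull {Ns, Hs}"
    unfolding R1 R2 R3 by (rule line_eq[OF NH M1 M2 M3 notall])
  then show ?thesis
    unfolding Oeq Heq fA fB fC steiner_line_def euler_line_def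
    by (simp add: Neq Hseq As_def[symmetric] Bs_def[symmetric] Cs_def[symmetric])
qed

end
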